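(* Let $\phi=(\phi_g,A_g,A)_{g\in G}$ be a partial action of a group $G$ on a ring $A$ and let $A\rtimes_\phi G$ be the partial skew group ring. Then $A\rtimes_\phi G$ is graded von Neumann regular if and only if $A_g$ is von Neumann regular for every $g\in G$.
   Context: A partial action of a group $G$ (identity $\varepsilon$) on a ring $A$ consists of ideals $A_g\subseteq A$ and ring isomorphisms $\phi_g:A_{g^{-1}}\to A_g$ such that (i) $A_\varepsilon=A$, $\phi_\varepsilon=\operatorname{id}$; (ii) $\phi_g(A_{g^{-1}}\cap A_h)=A_g\cap A_{gh}$; (iii) $\phi_g(\phi_h(x))=\phi_{gh}(x)$ for $x\in A_{h^{-1}}\cap A_{h^{-1}g^{-1}}$. The partial skew group ring $A\rtimes_\phi G$ is the set of finite formal sums $\sum_g a_g\delta_g$ with $a_g\in A_g$, with multiplication extending $(a_g\delta_g)(b_h\delta_h)=\phi_g(\phi_{g^{-1}}(a_g)b_h)\delta_{gh}$; it is $G$-graded with $(A\rtimes_\phi G)_g=A_g\delta_g$. A (not necessarily unital) ring $B$ is von Neumann regular if for every $x\in B$ there is $y\in B$ with $xyx=x$; a $G$-graded ring is graded von Neumann regular if this holds for every homogeneous $x$. *)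

theory Defs
  imports Main
begin

text \<open>Rings are non-unital associative rings (class ring); the group G is a type of
class group_add written additively: identity 0, product g + h, inverse - g.\<close>

definition is_ideal :: "'a::ring set \<Rightarrow> bool" where
  "is_ideal I \<longleftrightarrow> 0 \<in> I \<and> (\<forall>x\<in>I. \<forall>y\<in>I. x + y \<in> I) \<and> (\<forall>x\<in>I. - x \<in> I)
     \<and> (\<forall>x\<in>I. \<forall>r. r * x \<in> I \<and> x * r \<in> I)"

definition partial_action :: "('g::group_add \<Rightarrow> 'a::ring set) \<Rightarrow> ('g \<Rightarrow> 'a \<Rightarrow> 'a) \<Rightarrow> bool" where
  "partial_action A \<phi> \<longleftrightarrow>
     (\<forall>g. is_ideal (A g))
   \<and> (\<forall>g. bij_betw (\<phi> g) (A (- g)) (A g))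
   \<and> (\<forall>g. \<forall>x\<in>A (- g). \<forall>y\<in>A (- g). \<phi> g (x + y) = \<phi> g x + \<phi> g y \<and> \<phi> g (x * y) = \<phi> g x * \<phi> g y)
   \<and> A 0 = UNIV \<and> (\<forall>x. \<phi> 0 x = x)
   \<and> (\<forall>g h. \<phi> g ` (A (- g) \<inter> A h) = A g \<inter> A (g + h))
   \<and> (\<forall>g h. \<forall>x \<in> A (- h) \<inter> A (- h + - g). \<phi> g (\<phi> h x) = \<phi> (g + h) x)"

text \<open>Elements of the partial skew group ring: finitely supported functions f with f g in A g
(f represents the formal sum of f g delta_g).\<close>
definition skew_carrier :: "('g \<Rightarrow> 'a::ring set) \<Rightarrow> ('g \<Rightarrow> 'a) set" where
  "skew_carrier A = {f. finite {g. f g \<noteq> 0} \<and> (\<forall>g. f g \<in> A g)}"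

text \<open>Multiplication extending (a delta_g)(b delta_h) = phi_g(phi_{g^-1}(a) b) delta_{gh}.\<close>
definition skew_mult :: "('g::group_add \<Rightarrow> 'a \<Rightarrow> 'a::ring) \<Rightarrow> ('g \<Rightarrow> 'a) \<Rightarrow> ('g \<Rightarrow> 'a) \<Rightarrow> ('g \<Rightarrow> 'a)" where
  "skew_mult \<phi> f h = (\<lambda>k. \<Sum>g\<in>{g. f g \<noteq> 0}. \<phi> g (\<phi> (- g) (f g) * h (- g + k)))"

definition delta :: "'g \<Rightarrow> 'a::zero \<Rightarrow> ('g \<Rightarrow> 'a)" where
  "delta g a = (\<lambda>k. if k = g then a else 0)"

definition graded_vnr :: "('g::group_add \<Rightarrow> 'a::ring set) \<Rightarrow> ('g \<Rightarrow> 'a \<Rightarrow> 'a) \<Rightarrow> bool" where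
  "graded_vnr A \<phi> \<longleftrightarrow> (\<forall>g. \<forall>a\<in>A g. \<exists>y\<in>skew_carrier A.
      skew_mult \<phi> (skew_mult \<phi> (delta g a) y) (delta g a) = delta g a)"

definition vnr_subring :: "'a::ring set \<Rightarrow> bool" where
  "vnr_subring S \<longleftrightarrow> (\<forall>x\<in>S. \<exists>y\<in>S. x * y * x = x)"

end

theory Submission
  imports Defs
begin

lemma pa_facts:
  assumes "partial_action A \<phi>"
  shows pa_zero: "0 \<in> A g"
    and pa_mulR: "x \<in> A g \<Longrightarrow> x * r \<in> A g"
    and pa_mulL: "x \<in> A g \<Longrightarrow> r * x \<in> A g"
    and pa_into: "x \<in> A (- g) \<Longrightarrow> \<phi> g x \<in> A g"
    and pa_mult: "x \<in> A (- g) \<Longrightarrow> y \<in> A (- g) \<Longrightarrow> \<phi> g (x * y) = \<phi> g x * \<phi> g y"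
    and pa_id0: "\<phi> 0 x = x"
    and pa_inv: "x \<in> A g \<Longrightarrow> \<phi> g (\<phi> (- g) x) = x"
proof -
  note c = assms[unfolded partial_action_def]
  have id: "\<forall>g. is_ideal (A g)" using c by (rule conjunct1)
  have bij: "\<forall>g. bij_betw (\<phi> g) (A (- g)) (A g)" using c[THEN conjunct2] by (rule conjunct1)
  have hom: "\<forall>g. \<forall>x\<in>A (- g). \<forall>y\<in>A (- g). \<phi> g (x + y) = \<phi> g x + \<phi> g y \<and> \<phi> g (x * y) = \<phi> g x * \<phi> g y"
    using c[THEN conjunct2, THEN conjunct2] by (rule conjunct1)
  have A0: "A 0 = UNIV" using c[THEN conjunct2, THEN conjunct2, THEN conjunct2] by (rule conjunct1)
  have p0: "\<forall>x. \<phi> 0 x = x" using c[THEN conjunct2, THEN conjunct2, THEN conjunct2, THEN conjunct2] by (rule conjunct1)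
  have comp: "\<forall>g h. \<forall>x \<in> A (- h) \<inter> A (- h + - g). \<phi> g (\<phi> h x) = \<phi> (g + h) x"
    using c[THEN conjunct2, THEN conjunct2, THEN conjunct2, THEN conjunct2, THEN conjunct2] by (rule conjunct2)
  show z: "0 \<in> A g" for g using id[rule_format, of g] by (simp add: is_ideal_def)
  show "x \<in> A g \<Longrightarrow> x * r \<in> A g" using id[rule_format, of g] by (simp add: is_ideal_def)
  show "x \<in> A g \<Longrightarrow> r * x \<in> A g" using id[rule_format, of g] by (simp add: is_ideal_def)
  show "x \<in> A (- g) \<Longrightarrow> \<phi> g x \<in> A g" using bij_betwE[OF bij[rule_format, of g]] by blast
  show "x \<in> A (- g) \<Longrightarrow> y \<in> A (- g) \<Longrightarrow> \<phi> g (x * y) = \<phi> g x * \<phi> g y"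
    using hom by simp
  show "\<phi> 0 x = x" using p0 by simp
  assume x: "x \<in> A g"
  hence "x \<in> A (- (- g)) \<inter> A (- (- g) + - g)" using A0 by simp
  hence "\<phi> g (\<phi> (- g) x) = \<phi> (g + - g) x" using comp by simp
  thus "\<phi> g (\<phi> (- g) x) = x" using p0 by simp
qed

lemma pa_phi0:
  assumes "partial_action A \<phi>" shows "\<phi> g 0 = 0"
proof -
  have z: "0 \<in> A (- g)" using pa_zero[OF assms] .
  have h: "\<forall>x\<in>A (- g). \<forall>y\<in>A (- g). \<phi> g (x + y) = \<phi> g x + \<phi> g y \<and> \<phi> g (x * y) = \<phi> g x * \<phi> g y"
    using assms[unfolded partial_action_def, THEN conjunct2, THEN conjunct2, THEN conjunct1] by (rule spec)
  have "\<phi> g (0 + 0) = \<phi> g 0 + \<phi> g 0" using h[rule_format, OF z z] by (rule conjunct1)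
  thus ?thesis by simp
qed

lemma skew_delta_left:
  "a \<noteq> 0 \<Longrightarrow> skew_mult \<phi> (delta g a) h = (\<lambda>k. \<phi> g (\<phi> (- g) a * h (- g + k)))"
proof -
  assume "a \<noteq> 0"
  hence "{g'. delta g a g' \<noteq> 0} = {g}" by (auto simp: delta_def)
  thus ?thesis unfolding skew_mult_def by (simp add: delta_def)
qed

lemma sum_single_supp:
  assumes "finite S" "\<forall>x\<in>S. x \<noteq> c \<longrightarrow> F x = 0"
  shows "sum F S = (if c \<in> S then F c else 0)"
proof (cases "c \<in> S")
  case True
  have "sum F S = F c + sum F (S - {c})" using assms True by (simp add: sum.remove)
  also have "sum F (S - {c}) = 0" using assms by (intro sum.neutral) auto
  finally show ?thesis using True by simp
next
  case False thus ?thesis using assms by (metis sum.neutral)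
qed

theorem mainTheorem4:
  fixes A :: "'g::group_add \<Rightarrow> 'a::ring set" and \<phi> :: "'g \<Rightarrow> 'a \<Rightarrow> 'a"
  assumes "partial_action A \<phi>"
  shows "graded_vnr A \<phi> \<longleftrightarrow> (\<forall>g. vnr_subring (A g))"
proof
  note pa = pa_facts[OF assms] pa_phi0[OF assms]
  assume gv: "graded_vnr A \<phi>"
  show "\<forall>g. vnr_subring (A g)"
    unfolding vnr_subring_def
  proof (intro allI ballI)
    fix g x assume xA: "x \<in> A g"
    show "\<exists>y\<in>A g. x * y * x = x"
    proof (cases "x = 0")
      case True thus ?thesis using pa(1)[of g] by auto
    next
      case nz: False
      obtain y where yc: "y \<in> skew_carrier A"
        and eq: "skew_mult \<phi> (skew_mult \<phi> (delta g x) y) (delta g x) = delta g x"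
        using gv[unfolded graded_vnr_def, rule_format, OF xA] by (elim bexE)
      define X where "X = skew_mult \<phi> (delta g x) y"
      have Xd: "X = (\<lambda>k. \<phi> g (\<phi> (- g) x * y (- g + k)))"
        unfolding X_def by (rule skew_delta_left[OF nz])
      define S where "S = {g'. X g' \<noteq> 0}"
      have eqg: "(\<Sum>g'\<in>S. \<phi> g' (\<phi> (- g') (X g') * delta g x (- g' + g))) = x"
      proof -
        have "skew_mult \<phi> X (delta g x) g = delta g x g" using fun_cong[OF eq, of g]
          unfolding X_def .
        also have "delta g x g = x" by (simp add: delta_def)
        finally have "skew_mult \<phi> X (delta g x) g = x" .
        thus ?thesis unfolding skew_mult_def S_def .
      qed
      have fin: "finite S"
      proof (rule ccontr)
        assume "\<not> finite S"
        thus False using eqg nz by simp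
      qed
      have "(\<Sum>g'\<in>S. \<phi> g' (\<phi> (- g') (X g') * delta g x (- g' + g))) = X 0 * x"
      proof -
        have "(\<Sum>g'\<in>S. \<phi> g' (\<phi> (- g') (X g') * delta g x (- g' + g)))
          = (if 0 \<in> S then \<phi> 0 (\<phi> (- 0) (X 0) * delta g x (- 0 + g)) else 0)"
        proof (rule sum_single_supp[OF fin], intro ballI impI)
          fix g' :: 'g assume "g' \<noteq> 0"
          have "- g' + g \<noteq> g"
          proof
            assume "- g' + g = g"
            hence "- g' + g = 0 + g" by simp
            hence "- g' = 0" by (rule add_right_imp_eq)
            thus False using \<open>g' \<noteq> 0\<close> by simp
          qed
          thus "\<phi> g' (\<phi> (- g') (X g') * delta g x (- g' + g)) = 0"
            by (simp add: delta_def pa(8))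
        qed
        also have "\<dots> = X 0 * x" using pa(6) by (auto simp: S_def delta_def)
        finally show ?thesis .
      qed
      hence X0: "X 0 * x = x" using eqg by simp
      have yA: "y (- g) \<in> A (- g)" using yc unfolding skew_carrier_def by blast
      define b where "b = \<phi> g (y (- g))"
      have bA: "b \<in> A g" unfolding b_def using pa(4) yA by blast
      have yb: "y (- g) = \<phi> (- g) b"
        unfolding b_def using pa(7)[of "y (- g)" "- g"] yA by simp
      have xA': "\<phi> (- g) x \<in> A (- g)" using pa(4)[of x "- g"] xA by simp
      have bA': "\<phi> (- g) b \<in> A (- g)" using pa(4)[of b "- g"] bA by simp
      have "X 0 = \<phi> g (\<phi> (- g) x * \<phi> (- g) b)" using Xd yb by simp
      also have "\<dots> = \<phi> g (\<phi> (- g) x) * \<phi> g (\<phi> (- g) b)" using pa(5) xA' bA' by blast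
      also have "\<dots> = x * b" using pa(7) xA bA by simp
      finally show ?thesis using X0 bA by (metis mult.assoc)
    qed
  qed
next
  note pa = pa_facts[OF assms] pa_phi0[OF assms]
  assume vn: "\<forall>g. vnr_subring (A g)"
  show "graded_vnr A \<phi>" unfolding graded_vnr_def
  proof (intro allI ballI)
    fix g a assume aA: "a \<in> A g"
    show "\<exists>y\<in>skew_carrier A. skew_mult \<phi> (skew_mult \<phi> (delta g a) y) (delta g a) = delta g a"
    proof (cases "a = 0")
      case True
      have "delta g (0::'a) = (\<lambda>k. 0)" by (simp add: delta_def)
      moreover have "skew_mult \<phi> (\<lambda>k. 0) h = (\<lambda>k. 0)" for h by (simp add: skew_mult_def)
      moreover have "(\<lambda>k. 0) \<in> skew_carrier A" using pa(1) by (simp add: skew_carrier_def)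
      ultimately show ?thesis using True by metis
    next
      case nz: False
      obtain b where bA: "b \<in> A g" and aba: "a * b * a = a"
        using vn aA unfolding vnr_subring_def by blast
      define y where "y = delta (- g) (\<phi> (- g) b)"
      have bA': "\<phi> (- g) b \<in> A (- g)" using pa(4)[of b "- g"] bA by simp
      have aA': "\<phi> (- g) a \<in> A (- g)" using pa(4)[of a "- g"] aA by simp
      have yc: "y \<in> skew_carrier A"
      proof -
        have "{k. y k \<noteq> 0} \<subseteq> {- g}" by (auto simp: y_def delta_def)
        hence "finite {k. y k \<noteq> 0}" by (rule finite_subset) simp
        moreover have "y k \<in> A k" for k using bA' pa(1)[of k] by (simp add: y_def delta_def)
        ultimately show ?thesis unfolding skew_carrier_def by blast
      qed
      have abA: "a * b \<in> A g" using pa(2) aA by blast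
      have Xf: "skew_mult \<phi> (delta g a) y = (\<lambda>k. \<phi> g (\<phi> (- g) a * y (- g + k)))"
        by (rule skew_delta_left[OF nz])
      have X: "skew_mult \<phi> (delta g a) y = delta 0 (a * b)"
        unfolding Xf
      proof
        fix k
        show "\<phi> g (\<phi> (- g) a * y (- g + k)) = delta 0 (a * b) k"
        proof (cases "k = 0")
          case True
          have "\<phi> g (\<phi> (- g) a * \<phi> (- g) b) = \<phi> g (\<phi> (- g) a) * \<phi> g (\<phi> (- g) b)"
            by (rule pa(5)[OF aA' bA'])
          also have "\<dots> = a * b" by (simp only: pa(7)[OF aA] pa(7)[OF bA])
          finally show ?thesis using True
            by (simp add: y_def delta_def)
        next
          case False
          hence "- g + k \<noteq> - g" by (metis add.right_neutral add_left_cancel)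
          thus ?thesis using False
            by (simp add: y_def delta_def pa(8))
        qed
      qed
      have abnz: "a * b \<noteq> 0"
      proof
        assume "a * b = 0"
        hence "a * b * a = 0" by simp
        thus False using aba nz by simp
      qed
      have "skew_mult \<phi> (delta 0 (a * b)) (delta g a) = delta g a"
      proof -
        have "skew_mult \<phi> (delta 0 (a * b)) (delta g a) = (\<lambda>k. a * b * delta g a k)"
          unfolding skew_delta_left[OF abnz] by (simp add: pa(6))
        also have "\<dots> = delta g a" using aba by (simp add: delta_def fun_eq_iff)
        finally show ?thesis .
      qed
      thus ?thesis using X yc by (intro bexI[of _ y]) simp_all
    qed
  qed
qed

end
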